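(* Let $q \in (0,1)$ and $k > 1$ be fixed, and let $t = k/q$ (assumed to be a positive integer). Let $n$ be even with $n \ge 2k/q$, and let $S_l = (u_1,\dots,u_{n/2})$ and $S_r = (v_1,\dots,v_{n/2})$ be the two halves of the span list. Suppose the meshability relation between spans of $S_l$ and spans of $S_r$ is random such that each pair $(u_i, v_j)$ is meshable with probability $q$, and for every collection of pairs forming an acyclic graph (a forest) on $S_l \cup S_r$, the corresponding meshability events are mutually independent. Run the procedure SplitMesher with parameter $t$. Then, with probability tending to $1$ as $n \to \infty$, SplitMesher finds a matching (a set of pairwise disjoint meshable pairs, each pair consisting of one span of $S_l$ and one of $S_r$) of size at least $n(1-e^{-2k})/4$.
   Context: Procedure SplitMesher$(S,t)$: given a randomly ordered list $S$ of $n$ spans, split it into $S_l = S[1:n/2]$ and $S_r = S[n/2+1:n]$. For $i = 0,1,\dots,t-1$: for $j = 0,1,\dots,\mathrm{len}-1$ where $\mathrm{len}=|S_l|$: if $S_l(j)$ and $S_r((j+i) \bmod \mathrm{len})$ are meshable, remove both from their respective lists and mesh them together (i.e. record them as a matched pair). Thus each span of $S_l$ is compared against at most $t$ spans of $S_r$, in cyclic offset order, and a span is never matched twice. Two spans are \emph{meshable} iff their occupancy bitstrings $s_1,s_2\in\{0,1\}^b$ satisfy $\sum_i s_1(i)s_2(i)=0$. *)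

theory Defs
  imports "HOL-Probability.Probability"
begin

text \<open>Spans: left half S_l indexed 0..<m, right half S_r indexed 0..<m (m = n/2).
  A meshability relation is a set R of pairs (i,j): the i-th span of S_l and the
  j-th span of S_r are meshable.\<close>

definition sm_step :: "(nat \<times> nat) set \<Rightarrow> nat \<times> nat \<Rightarrow> (nat \<times> nat) list \<Rightarrow> (nat \<times> nat) list" where
  "sm_step R p M =
     (if fst p \<notin> fst ` set M \<and> snd p \<notin> snd ` set M \<and> p \<in> R then p # M else M)"

definition split_mesher :: "(nat \<times> nat) set \<Rightarrow> nat \<Rightarrow> nat \<Rightarrow> (nat \<times> nat) list" where
  "split_mesher R m t =
     fold (sm_step R) [(j, (j + i) mod m). i \<leftarrow> [0..<t], j \<leftarrow> [0..<m]] []"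

definition is_matching :: "(nat \<times> nat) set \<Rightarrow> nat \<Rightarrow> (nat \<times> nat) set \<Rightarrow> bool" where
  "is_matching R m M \<longleftrightarrow> M \<subseteq> R \<inter> ({..<m} \<times> {..<m}) \<and> inj_on fst M \<and> inj_on snd M"

definition bip_has_cycle :: "(nat \<times> nat) set \<Rightarrow> bool" where
  "bip_has_cycle F \<longleftrightarrow> (\<exists>(r::nat) (a::nat\<Rightarrow>nat) (b::nat\<Rightarrow>nat). r \<ge> 2 \<and> inj_on a {..<r} \<and> inj_on b {..<r} \<and>
      (\<forall>s<r. (a s, b s) \<in> F \<and> (a ((s + 1) mod r), b s) \<in> F))"

definition bip_forest :: "(nat \<times> nat) set \<Rightarrow> bool" where
  "bip_forest F \<longleftrightarrow> \<not> bip_has_cycle F"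

end

theory Submission
  imports Defs
begin


lemma mod_add_cancel_right: "(a + (c::nat)) mod m = (b + c) mod m \<Longrightarrow> a mod m = b mod m"
  by (simp add: nat_mod_eq_iff)

lemma fold_sm_mono: "set M \<subseteq> set (fold (sm_step R) xs M)"
proof (induction xs arbitrary: M)
  case (Cons x xs)
  have "set M \<subseteq> set (sm_step R x M)" by (auto simp: sm_step_def)
  then show ?case using Cons[of "sm_step R x M"] by auto
qed simp

lemma fold_sm_sub: "set (fold (sm_step R) xs M) \<subseteq> set M \<union> (set xs \<inter> R)"
proof (induction xs arbitrary: M)
  case (Cons x xs)
  have "set (sm_step R x M) \<subseteq> set M \<union> ({x} \<inter> R)" by (auto simp: sm_step_def)
  then show ?case using Cons[of "sm_step R x M"] by auto
qed simp

lemma fold_sm_inj: "inj_on fst (set M) \<and> inj_on snd (set M) \<Longrightarrow>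
   inj_on fst (set (fold (sm_step R) xs M)) \<and> inj_on snd (set (fold (sm_step R) xs M))"
proof (induction xs arbitrary: M)
  case (Cons x xs)
  have "inj_on fst (set (sm_step R x M)) \<and> inj_on snd (set (sm_step R x M))"
    using Cons.prems by (auto simp: sm_step_def inj_on_def image_iff)
  then show ?case using Cons.IH by simp
qed simp

lemma decomp:
  assumes "i < t" "j < m"
  shows "[(j, (j + i) mod m). i \<leftarrow> [0..<t], j \<leftarrow> [0..<m]] =
     ([(j, (j + i) mod m). i \<leftarrow> [0..<i], j \<leftarrow> [0..<m]] @ [(j', (j' + i) mod m). j' \<leftarrow> [0..<j]])
     @ (j, (j+i) mod m) # ([(j', (j' + i) mod m). j' \<leftarrow> [Suc j..<m]] @ [(j, (j + i) mod m). i \<leftarrow> [Suc i..<t], j \<leftarrow> [0..<m]])"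
proof -
  have t: "[0..<t] = [0..<i] @ i # [Suc i..<t]" using assms(1)
    using upt_add_eq_append[of 0 i "t-i"] upt_conv_Cons[of i t] by simp
  have m: "[0..<m] = [0..<j] @ j # [Suc j..<m]" using assms(2)
    using upt_add_eq_append[of 0 j "m-j"] upt_conv_Cons[of j m] by simp
  have "[(j, (j + i) mod m). i \<leftarrow> [0..<t], j \<leftarrow> [0..<m]] = 
     [(j, (j + i) mod m). i \<leftarrow> [0..<i], j \<leftarrow> [0..<m]] @ [(j', (j' + i) mod m). j' \<leftarrow> [0..<m]] @
     [(j, (j + i) mod m). i \<leftarrow> [Suc i..<t], j \<leftarrow> [0..<m]]"
    by (subst t) simp
  also have "[(j', (j' + i) mod m). j' \<leftarrow> [0..<m]] = [(j', (j' + i) mod m). j' \<leftarrow> [0..<j]] @ (j, (j+i) mod m) # [(j', (j' + i) mod m). j' \<leftarrow> [Suc j..<m]]"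
    by (subst m) simp
  finally show ?thesis by simp
qed

lemma key:
  assumes "j < m" "i < t" "t \<le> m" "(j, (j+i) mod m) \<in> R"
    and "\<And>s. 1 \<le> s \<Longrightarrow> s \<le> i \<Longrightarrow> ((j+s) mod m, (j+i) mod m) \<notin> R"
  shows "j \<in> fst ` set (split_mesher R m t)"
proof -
  define A where "A = [(j, (j + i) mod m). i \<leftarrow> [0..<i], j \<leftarrow> [0..<m]] @ [(j', (j' + i) mod m). j' \<leftarrow> [0..<j]]"
  define B where "B = [(j', (j' + i) mod m). j' \<leftarrow> [Suc j..<m]] @ [(j, (j + i) mod m). i \<leftarrow> [Suc i..<t], j \<leftarrow> [0..<m]]"
  have L: "[(j, (j + i) mod m). i \<leftarrow> [0..<t], j \<leftarrow> [0..<m]] = A @ (j, (j+i) mod m) # B"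
    unfolding A_def B_def by (rule decomp[OF assms(2,1)])
  define M0 where "M0 = fold (sm_step R) A []"
  have SM: "split_mesher R m t = fold (sm_step R) B (sm_step R (j, (j+i) mod m) M0)"
    unfolding split_mesher_def L M0_def by simp
  have "j \<in> fst ` set (sm_step R (j, (j+i) mod m) M0)"
  proof (cases "j \<in> fst ` set M0")
    case True
    then show ?thesis by (auto simp: sm_step_def)
  next
    case False
    have "(j+i) mod m \<notin> snd ` set M0"
    proof
      assume "(j+i) mod m \<in> snd ` set M0"
      then obtain p where "p \<in> set M0" "snd p = (j+i) mod m" by (metis imageE)
      then obtain j' where jin: "(j', (j+i) mod m) \<in> set M0" by (metis prod.collapse)
      then have "(j', (j+i) mod m) \<in> set A \<inter> R"
        using fold_sm_sub[of R A "[]"] unfolding M0_def by auto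
      then have inR: "(j', (j+i) mod m) \<in> R" and inA: "(j', (j+i) mod m) \<in> set A" by auto
      from inA consider (a) i' where "i' < i" "j' < m" "(j'+i') mod m = (j+i) mod m"
        | (b) "j' < j" "(j'+i) mod m = (j+i) mod m"
        unfolding A_def by auto
      then show False
      proof cases
        case a
        have "j' = (j + (i - i')) mod m"
        proof -
          have "(j' + i') mod m = (j + (i - i') + i') mod m" using a by simp
          then have "j' mod m = (j + (i - i')) mod m"
            by (metis mod_add_cancel_right)
          then show ?thesis using a by simp
        qed
        moreover have "1 \<le> i - i'" "i - i' \<le> i" using a by auto
        moreover have "((j + (i - i')) mod m, (j+i) mod m) \<notin> R"
          using assms(5)[of "i - i'"] \<open>1 \<le> i - i'\<close> \<open>i - i' \<le> i\<close> by blast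
        ultimately show False using inR by metis
      next
        case b
        then have "j' mod m = j mod m" by (metis mod_add_cancel_right)
        then show False using b assms(1) by simp
      qed
    qed
    then show ?thesis using False assms(4) by (auto simp: sm_step_def)
  qed
  moreover have "set (sm_step R (j, (j+i) mod m) M0) \<subseteq> set (split_mesher R m t)"
    unfolding SM by (rule fold_sm_mono)
  ultimately show ?thesis by (rule rev_subsetD[OF _ image_mono])
qed

lemma sm_matching:
  assumes "0 < m"
  shows "is_matching R m (set (split_mesher R m t))"
proof -
  let ?L = "[(j, (j + i) mod m). i \<leftarrow> [0..<t], j \<leftarrow> [0..<m]]"
  have "set ?L \<subseteq> {..<m} \<times> {..<m}" using assms by auto
  moreover have "set (split_mesher R m t) \<subseteq> set ?L \<inter> R"
    using fold_sm_sub[of R ?L "[]"] unfolding split_mesher_def by simp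
  moreover have "inj_on fst (set (split_mesher R m t)) \<and> inj_on snd (set (split_mesher R m t))"
    unfolding split_mesher_def by (rule fold_sm_inj) simp
  ultimately show ?thesis unfolding is_matching_def by blast
qed



lemma forest_center:
  assumes "\<And>e. e \<in> F \<Longrightarrow> fst e = a0 \<or> snd e = b0"
  shows "bip_forest F"
  unfolding bip_forest_def bip_has_cycle_def
proof
  assume "\<exists>(r::nat) (a::nat\<Rightarrow>nat) (b::nat\<Rightarrow>nat). r \<ge> 2 \<and> inj_on a {..<r} \<and> inj_on b {..<r} \<and>
      (\<forall>s<r. (a s, b s) \<in> F \<and> (a ((s + 1) mod r), b s) \<in> F)"
  then obtain r a b where r: "(r::nat) \<ge> 2" and ia: "inj_on a {..<r}" and ib: "inj_on b {..<r}"
    and E: "\<And>s. s < r \<Longrightarrow> (a s, b s) \<in> F \<and> (a ((s + 1) mod r), b s) \<in> F" by blast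
  have bs: "b s = b0" if s: "s < r" for s
  proof (rule ccontr)
    assume ne: "b s \<noteq> b0"
    have "(s + 1) mod r \<noteq> s"
    proof (cases "s + 1 < r")
      case True then show ?thesis by simp
    next
      case False then have "s + 1 = r" using s by simp
      then show ?thesis using r by auto
    qed
    moreover have "(s + 1) mod r < r" using r by simp
    ultimately have "a ((s + 1) mod r) \<noteq> a s" using ia s by (meson inj_onD lessThan_iff)
    moreover have "a s = a0" using assms[of "(a s, b s)"] E[OF s] ne by auto
    moreover have "a ((s + 1) mod r) = a0" using assms[of "(a ((s + 1) mod r), b s)"] E[OF s] ne by auto
    ultimately show False by simp
  qed
  have "b 0 = b 1" using bs[of 0] bs[of 1] r by simp
  moreover have "(0::nat) \<noteq> 1" by simp
  moreover have "(0::nat) \<in> {..<r}" "(1::nat) \<in> {..<r}" using r by auto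
  ultimately show False using inj_onD[OF ib] by blast
qed

lemma cyc_stays:
  fixes r :: nat and a b :: "nat \<Rightarrow> nat"
  assumes E: "\<And>s. s < r \<Longrightarrow> (a s, b s) \<in> F1 \<union> F2 \<and> (a ((s + 1) mod r), b s) \<in> F1 \<union> F2"
    and I1: "\<And>e. e \<in> F1 \<Longrightarrow> fst e \<in> I1 \<and> snd e \<in> I1"
    and I2: "\<And>e. e \<in> F2 \<Longrightarrow> fst e \<in> I2 \<and> snd e \<in> I2"
    and D: "I1 \<inter> I2 = {}" and a0: "a 0 \<in> I1"
  shows "\<forall>s<r. (a s, b s) \<in> F1 \<and> (a ((s + 1) mod r), b s) \<in> F1"
proof -
  have step: "(a s, b s) \<in> F1 \<and> (a ((s + 1) mod r), b s) \<in> F1 \<and> a ((s+1) mod r) \<in> I1"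
    if s: "s < r" and as: "a s \<in> I1" for s
  proof -
    have "a s \<notin> I2" using as D by blast
    then have e1: "(a s, b s) \<in> F1" using E[OF s] I2[of "(a s, b s)"] by auto
    then have "b s \<in> I1" using I1 by fastforce
    then have "b s \<notin> I2" using D by blast
    then have e2: "(a ((s + 1) mod r), b s) \<in> F1" using E[OF s] I2[of "(a ((s + 1) mod r), b s)"] by auto
    then show ?thesis using e1 I1 by fastforce
  qed
  have all: "s < r \<Longrightarrow> a s \<in> I1" for s
  proof (induction s)
    case 0 then show ?case using a0 by simp
  next
    case (Suc s)
    then have "a ((s+1) mod r) \<in> I1" using step[of s] by simp
    then show ?case using Suc.prems by simp
  qed
  show ?thesis using step all by blast
qed

lemma forest_union:
  assumes f1: "bip_forest F1" and f2: "bip_forest F2"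
    and I1: "\<And>e. e \<in> F1 \<Longrightarrow> fst e \<in> I1 \<and> snd e \<in> I1"
    and I2: "\<And>e. e \<in> F2 \<Longrightarrow> fst e \<in> I2 \<and> snd e \<in> I2"
    and D: "I1 \<inter> I2 = {}"
  shows "bip_forest (F1 \<union> F2)"
  unfolding bip_forest_def bip_has_cycle_def
proof
  assume "\<exists>(r::nat) (a::nat\<Rightarrow>nat) (b::nat\<Rightarrow>nat). r \<ge> 2 \<and> inj_on a {..<r} \<and> inj_on b {..<r} \<and>
      (\<forall>s<r. (a s, b s) \<in> F1 \<union> F2 \<and> (a ((s + 1) mod r), b s) \<in> F1 \<union> F2)"
  then obtain r a b where r: "(r::nat) \<ge> 2" and ia: "inj_on a {..<r}" and ib: "inj_on b {..<r}"
    and E: "\<And>s. s < r \<Longrightarrow> (a s, b s) \<in> F1 \<union> F2 \<and> (a ((s + 1) mod r), b s) \<in> F1 \<union> F2" by blast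
  have "(a 0, b 0) \<in> F1 \<union> F2" using E[of 0] r by simp
  then show False
  proof
    assume "(a 0, b 0) \<in> F1"
    then have "a 0 \<in> I1" using I1 by fastforce
    have "\<forall>s<r. (a s, b s) \<in> F1 \<and> (a ((s + 1) mod r), b s) \<in> F1"
      using E I1 I2 D \<open>a 0 \<in> I1\<close> by (rule cyc_stays)
    then have "bip_has_cycle F1" unfolding bip_has_cycle_def
      apply -
      apply (rule exI[of _ r], rule exI[of _ a], rule exI[of _ b])
      using r ia ib by blast
    then show False using f1 unfolding bip_forest_def by simp
  next
    assume "(a 0, b 0) \<in> F2"
    then have "a 0 \<in> I2" using I2 by fastforce
    have E': "\<And>s. s < r \<Longrightarrow> (a s, b s) \<in> F2 \<union> F1 \<and> (a ((s + 1) mod r), b s) \<in> F2 \<union> F1"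
      using E by blast
    have "I2 \<inter> I1 = {}" using D by blast
    have "\<forall>s<r. (a s, b s) \<in> F2 \<and> (a ((s + 1) mod r), b s) \<in> F2"
      using E' I2 I1 \<open>I2 \<inter> I1 = {}\<close> \<open>a 0 \<in> I2\<close> by (rule cyc_stays)
    then have "bip_has_cycle F2" unfolding bip_has_cycle_def
      apply -
      apply (rule exI[of _ r], rule exI[of _ a], rule exI[of _ b])
      using r ia ib by blast
    then show False using f2 unfolding bip_forest_def by simp
  qed
qed

lemma prob_pattern:
  fixes p :: "(nat \<times> nat) set pmf" and q :: real
  assumes indep: "prob_space.indep_events (measure_pmf p) (\<lambda>e. {R. e \<in> R}) F"
    and pe: "\<And>e. e \<in> F \<Longrightarrow> measure_pmf.prob p {R. e \<in> R} = q"
    and fin: "finite F"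
    and NF: "Neg \<subseteq> F" and PF: "Pos \<subseteq> F" and PN: "Pos \<inter> Neg = {}"
  shows "measure_pmf.prob p {R. Pos \<subseteq> R \<and> Neg \<inter> R = {}} = q ^ card Pos * (1-q) ^ card Neg"
proof -
  have fN: "finite Neg" using NF fin by (rule finite_subset)
  have base: "measure_pmf.prob p {R. Pos \<subseteq> R} = q ^ card Pos" if PF: "Pos \<subseteq> F" for Pos
  proof (cases "Pos = {}")
    case True
    then show ?thesis using measure_pmf.prob_space[of p] by simp
  next
    case False
    have fP: "finite Pos" using PF fin by (rule finite_subset)
    have eq: "{R. Pos \<subseteq> R} = (\<Inter>e\<in>Pos. {R. e \<in> R})" using False by auto
    have "measure_pmf.prob p (\<Inter>e\<in>Pos. {R. e \<in> R}) = (\<Prod>e\<in>Pos. measure_pmf.prob p {R. e \<in> R})"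
    proof -
      have "\<forall>J\<subseteq>F. J \<noteq> {} \<longrightarrow> finite J \<longrightarrow> measure_pmf.prob p (\<Inter>j\<in>J. {R. j \<in> R}) = (\<Prod>j\<in>J. measure_pmf.prob p {R. j \<in> R})"
        using indep unfolding prob_space.indep_events_def[OF prob_space_measure_pmf] by (rule conjunct2)
      then show ?thesis using PF False fP by blast
    qed
    also have "\<dots> = (\<Prod>e\<in>Pos. q)" using pe PF by (intro prod.cong) auto
    finally show ?thesis using eq by simp
  qed
  have "\<And>Pos. Neg \<subseteq> F \<Longrightarrow> Pos \<subseteq> F \<Longrightarrow> Pos \<inter> Neg = {} \<Longrightarrow>
    measure_pmf.prob p {R. Pos \<subseteq> R \<and> Neg \<inter> R = {}} = q ^ card Pos * (1-q) ^ card Neg"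
    using fN
  proof (induction Neg rule: finite_induct)
    case empty
    then show ?case using base by simp
  next
    case (insert e Neg)
    have eF: "e \<in> F" and eP: "e \<notin> Pos" using insert.prems by auto
    have fP: "finite Pos" using insert.prems(2) fin by (rule finite_subset)
    have sets: "{R. Pos \<subseteq> R \<and> insert e Neg \<inter> R = {}} =
        {R. Pos \<subseteq> R \<and> Neg \<inter> R = {}} - {R. insert e Pos \<subseteq> R \<and> Neg \<inter> R = {}}" by auto
    have sub: "{R. insert e Pos \<subseteq> R \<and> Neg \<inter> R = {}} \<subseteq> {R. Pos \<subseteq> R \<and> Neg \<inter> R = {}}" by auto
    have "measure_pmf.prob p {R. Pos \<subseteq> R \<and> insert e Neg \<inter> R = {}} =
       measure_pmf.prob p {R. Pos \<subseteq> R \<and> Neg \<inter> R = {}} - measure_pmf.prob p {R. insert e Pos \<subseteq> R \<and> Neg \<inter> R = {}}"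
      unfolding sets by (rule measure_pmf.finite_measure_Diff) (auto simp: sub)
    also have "measure_pmf.prob p {R. Pos \<subseteq> R \<and> Neg \<inter> R = {}} = q ^ card Pos * (1-q) ^ card Neg"
      by (rule insert.IH) (use insert.prems in auto)
    also have "measure_pmf.prob p {R. insert e Pos \<subseteq> R \<and> Neg \<inter> R = {}} = q ^ card (insert e Pos) * (1-q) ^ card Neg"
      by (rule insert.IH) (use insert.prems insert.hyps eF in auto)
    also have "card (insert e Pos) = Suc (card Pos)" using fP eP by simp
    also have "card (insert e Neg) = Suc (card Neg)" using insert.hyps by simp
    ultimately show ?case by (simp add: algebra_simps)
  qed
  then show ?thesis using NF PF PN by blast
qed



definition cen :: "nat \<Rightarrow> nat \<Rightarrow> nat \<Rightarrow> nat \<times> nat" where "cen m j i = (j, (j+i) mod m)"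
definition Lp :: "nat \<Rightarrow> nat \<Rightarrow> nat \<Rightarrow> (nat \<times> nat) set" where "Lp m j i = (\<lambda>a. (j, (j+a) mod m)) ` {..<i}"
definition Rp :: "nat \<Rightarrow> nat \<Rightarrow> nat \<Rightarrow> (nat \<times> nat) set" where "Rp m j i = (\<lambda>s. ((j+s) mod m, (j+i) mod m)) ` {1..i}"
definition Ng :: "nat \<Rightarrow> nat \<Rightarrow> nat \<Rightarrow> (nat \<times> nat) set" where "Ng m j i = Lp m j i \<union> Rp m j i"
definition evt :: "nat \<Rightarrow> nat \<Rightarrow> nat \<Rightarrow> (nat \<times> nat) set set" where
  "evt m j i = {R. {cen m j i} \<subseteq> R \<and> Ng m j i \<inter> R = {}}"
definition Ys :: "nat \<Rightarrow> nat \<Rightarrow> nat \<Rightarrow> (nat \<times> nat) set set" where "Ys m t j = (\<Union>i\<in>{..<t}. evt m j i)"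
definition Idx :: "nat \<Rightarrow> nat \<Rightarrow> nat \<Rightarrow> nat set" where "Idx m t j = (\<lambda>s. (j+s) mod m) ` {..<t}"

lemma modinj: "a < m \<Longrightarrow> b < m \<Longrightarrow> (j + a) mod m = (j + b) mod m \<Longrightarrow> a = (b::nat)"
proof -
  assume "a < m" "b < m" "(j + a) mod m = (j + b) mod m"
  then have "(a + j) mod m = (b + j) mod m" by (simp add: add.commute)
  then have "a mod m = b mod m" by (simp add: nat_mod_eq_iff)
  then show "a = b" using \<open>a < m\<close> \<open>b < m\<close> by simp
qed
lemma modne: "1 \<le> s \<Longrightarrow> s < m \<Longrightarrow> j < m \<Longrightarrow> (j + s) mod m \<noteq> (j::nat)"
proof
  assume "1 \<le> s" "s < m" "j < m" "(j + s) mod m = j"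
  then have "(j + s) mod m = (j + 0) mod m" by simp
  then have "s = 0" using modinj[of s m 0 j] \<open>s < m\<close> \<open>j < m\<close> by simp
  then show False using \<open>1 \<le> s\<close> by simp
qed

lemma card_Lp: "i < m \<Longrightarrow> card (Lp m j i) = i"
  unfolding Lp_def
proof (subst card_image)
  assume "i < m"
  show "inj_on (\<lambda>a. (j, (j + a) mod m)) {..<i}"
  proof (rule inj_onI)
    fix x y assume "x \<in> {..<i}" "y \<in> {..<i}" "(j, (j + x) mod m) = (j, (j + y) mod m)"
    then show "x = y" using modinj[of x m y j] \<open>i < m\<close> by auto
  qed
qed simp

lemma card_Rp: "i < m \<Longrightarrow> card (Rp m j i) = i"
  unfolding Rp_def
proof (subst card_image)
  assume "i < m"
  show "inj_on (\<lambda>s. ((j + s) mod m, (j + i) mod m)) {1..i}"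
  proof (rule inj_onI)
    fix x y assume "x \<in> {1..i}" "y \<in> {1..i}" "((j + x) mod m, (j + i) mod m) = ((j + y) mod m, (j + i) mod m)"
    then show "x = y" using modinj[of x m y j] \<open>i < m\<close> by auto
  qed
qed simp

lemma Lp_Rp_disj: "j < m \<Longrightarrow> i < m \<Longrightarrow> Lp m j i \<inter> Rp m j i = {}"
proof -
  assume jm: "j < m" and im: "i < m"
  have "fst e \<noteq> j" if "e \<in> Rp m j i" for e
  proof -
    from that obtain s where "s \<in> {1..i}" "e = ((j+s) mod m, (j+i) mod m)" unfolding Rp_def by blast
    then show ?thesis using modne[of s m j] jm im by auto
  qed
  moreover have "fst e = j" if "e \<in> Lp m j i" for e using that unfolding Lp_def by auto
  ultimately show ?thesis by blast
qed

lemma finite_Ng: "finite (Ng m j i)"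
  unfolding Ng_def Lp_def Rp_def by auto

lemma finite_Lp: "finite (Lp m j i)" unfolding Lp_def by simp
lemma finite_Rp: "finite (Rp m j i)" unfolding Rp_def by simp

lemma card_Ng: "j < m \<Longrightarrow> i < m \<Longrightarrow> card (Ng m j i) = 2 * i"
  unfolding Ng_def
  using card_Un_disjoint[OF finite_Lp finite_Rp Lp_Rp_disj] card_Lp card_Rp by simp

lemma cen_notin: "j < m \<Longrightarrow> i < m \<Longrightarrow> cen m j i \<notin> Ng m j i"
proof
  assume jm: "j < m" and im: "i < m" and c: "cen m j i \<in> Ng m j i"
  show False
  proof (cases "cen m j i \<in> Lp m j i")
    case True
    then obtain a where "a < i" "(j + a) mod m = (j + i) mod m" unfolding Lp_def cen_def by auto
    then show False using modinj[of a m i j] im by auto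
  next
    case False
    then have "cen m j i \<in> Rp m j i" using c unfolding Ng_def by auto
    then obtain s where "s \<in> {1..i}" "(j + s) mod m = j" unfolding Rp_def cen_def by auto
    then show False using modne[of s m j] jm im by auto
  qed
qed

lemma idx_in: "j < m \<Longrightarrow> s < t \<Longrightarrow> (j + s) mod m \<in> Idx m t j"
  unfolding Idx_def by auto

lemma j_in_Idx: "j < m \<Longrightarrow> 0 < t \<Longrightarrow> j \<in> Idx m t j"
  using idx_in[of j m 0 t] by simp

lemma edges_Idx: assumes "j < m" "i < t" "e \<in> insert (cen m j i) (Ng m j i)"
  shows "fst e \<in> Idx m t j \<and> snd e \<in> Idx m t j"
proof -
  have t0: "0 < t" using assms by simp
  have ci: "(j + i) mod m \<in> Idx m t j" using idx_in assms by blast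
  consider "e = cen m j i" | "e \<in> Lp m j i" | "e \<in> Rp m j i" using assms(3) unfolding Ng_def by blast
  then show ?thesis
  proof cases
    case 1 then show ?thesis using ci j_in_Idx[OF assms(1) t0] unfolding cen_def by simp
  next
    case 2
    then obtain a where "a < i" "e = (j, (j+a) mod m)" unfolding Lp_def by blast
    then show ?thesis using idx_in[of j m a t] j_in_Idx[OF assms(1) t0] assms by simp
  next
    case 3
    then obtain s where "s \<in> {1..i}" "e = ((j+s) mod m, (j+i) mod m)" unfolding Rp_def by blast
    then show ?thesis using idx_in[of j m s t] ci assms by simp
  qed
qed

lemma Idx_range: "0 < m \<Longrightarrow> Idx m t j \<subseteq> {..<m}"
  unfolding Idx_def by auto

lemma forest_D: "bip_forest (insert (cen m j i) (Ng m j i))"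
  by (rule forest_center[of _ j "(j+i) mod m"]) (auto simp: cen_def Ng_def Lp_def Rp_def)

lemma evt_disj: assumes "i < i'" shows "evt m j i \<inter> evt m j i' = {}"
proof -
  have "cen m j i \<in> Ng m j i'" using assms unfolding cen_def Ng_def Lp_def by auto
  then show ?thesis unfolding evt_def by blast
qed


lemma pmf_integrable_bounded:
  fixes p :: "'a pmf" and f :: "'a \<Rightarrow> real"
  assumes "\<And>x. \<bar>f x\<bar> \<le> B"
  shows "integrable (measure_pmf p) f"
  by (rule measure_pmf.integrable_const_bound[where B=B]) (auto simp: assms)

lemma pmf_int_ind:
  fixes p :: "'a pmf"
  shows "measure_pmf.expectation p (\<lambda>x. indicator A x - c * indicator B x - c * indicator C x + d :: real)
    = measure_pmf.prob p A - c * measure_pmf.prob p B - c * measure_pmf.prob p C + d"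
proof -
  have i: "integrable (measure_pmf p) (indicator S :: 'a \<Rightarrow> real)" for S
    by (rule pmf_integrable_bounded[where B=1]) (auto simp: indicator_def)
  have e: "measure_pmf.expectation p (indicator S :: 'a \<Rightarrow> real) = measure_pmf.prob p S" for S
    by simp
  show ?thesis
    using i by (simp add: e Bochner_Integration.integral_add Bochner_Integration.integral_diff)
qed

lemma pmf_markov:
  fixes p :: "'a pmf" and u :: "'a \<Rightarrow> real"
  assumes "\<And>x. 0 \<le> u x" "\<And>x. u x \<le> B" "0 < c"
  shows "measure_pmf.prob p {x. u x \<ge> c} \<le> measure_pmf.expectation p u / c"
proof -
  have "integrable (measure_pmf p) u" by (rule pmf_integrable_bounded[where B=B]) (use assms in auto)
  from integral_Markov_inequality_measure[OF this, of UNIV c] assms show ?thesis by simp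
qed


locale sm_setup =
  fixes p :: "(nat \<times> nat) set pmf" and q :: real and m t :: nat
  assumes ind: "\<And>F. F \<subseteq> {..<m} \<times> {..<m} \<Longrightarrow> bip_forest F \<Longrightarrow>
       prob_space.indep_events (measure_pmf p) (\<lambda>e. {R. e \<in> R}) F"
    and pe: "\<And>i j. i < m \<Longrightarrow> j < m \<Longrightarrow> measure_pmf.prob p {R. (i, j) \<in> R} = q"
    and tm: "t \<le> m" and t0: "0 < t"
begin

lemma m0: "0 < m" using tm t0 by simp

lemma D_range: "j < m \<Longrightarrow> i < t \<Longrightarrow> insert (cen m j i) (Ng m j i) \<subseteq> {..<m} \<times> {..<m}"
proof
  fix e assume "j < m" "i < t" "e \<in> insert (cen m j i) (Ng m j i)"
  then have "fst e \<in> Idx m t j \<and> snd e \<in> Idx m t j" by (rule edges_Idx)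
  then show "e \<in> {..<m} \<times> {..<m}" using Idx_range[OF m0, of t j] by (cases e) auto
qed

lemma pe': "F \<subseteq> {..<m} \<times> {..<m} \<Longrightarrow> e \<in> F \<Longrightarrow> measure_pmf.prob p {R. e \<in> R} = q"
  using pe by (cases e) auto

lemma prob_ev: assumes "j < m" "i < t"
  shows "measure_pmf.prob p (evt m j i) = q * (1-q)^(2*i)"
proof -
  let ?F = "insert (cen m j i) (Ng m j i)"
  have r: "?F \<subseteq> {..<m} \<times> {..<m}" using D_range assms by blast
  have "measure_pmf.prob p {R. {cen m j i} \<subseteq> R \<and> Ng m j i \<inter> R = {}} =
      q ^ card {cen m j i} * (1-q) ^ card (Ng m j i)"
    by (rule prob_pattern[OF ind[OF r forest_D] pe'[OF r]])
       (use finite_Ng cen_notin[of j m i] assms tm in auto)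
  also have "card (Ng m j i) = 2 * i" using card_Ng assms tm by simp
  finally show ?thesis unfolding evt_def by simp
qed

definition pp where "pp = (\<Sum>i<t. q * (1-q)^(2*i))"

lemma prob_Ys: assumes "j < m" shows "measure_pmf.prob p (Ys m t j) = pp"
proof -
  have "measure_pmf.prob p (Ys m t j) = (\<Sum>i<t. measure_pmf.prob p (evt m j i))"
    unfolding Ys_def
  proof (rule measure_pmf.finite_measure_finite_Union)
    show "disjoint_family_on (evt m j) {..<t}"
      unfolding disjoint_family_on_def
      by (metis Int_commute evt_disj linorder_neqE_nat)
  qed auto
  also have "\<dots> = pp" unfolding pp_def using prob_ev assms by simp
  finally show ?thesis .
qed


lemma prob_ev2: assumes j: "j < m" and j': "j' < m" and far: "Idx m t j \<inter> Idx m t j' = {}"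
    and i: "i < t" and i': "i' < t"
  shows "measure_pmf.prob p (evt m j i \<inter> evt m j' i') = q * (1-q)^(2*i) * (q * (1-q)^(2*i'))"
proof -
  let ?D1 = "insert (cen m j i) (Ng m j i)" and ?D2 = "insert (cen m j' i') (Ng m j' i')"
  let ?F = "?D1 \<union> ?D2"
  have r: "?F \<subseteq> {..<m} \<times> {..<m}" using D_range j j' i i' by blast
  have fo: "bip_forest ?F"
    by (rule forest_union[OF forest_D forest_D _ _ far]) (use edges_Idx j j' i i' in blast)+
  have E1: "fst e \<in> Idx m t j" if "e \<in> ?D1" for e using edges_Idx[OF j i that] by blast
  have E2: "fst e \<in> Idx m t j'" if "e \<in> ?D2" for e using edges_Idx[OF j' i' that] by blast
  have c1: "cen m j i \<in> ?D1" and c2: "cen m j' i' \<in> ?D2" by auto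
  have D12: "?D1 \<inter> ?D2 = {}" using E1 E2 far by blast
  have ne: "cen m j i \<noteq> cen m j' i'" using c1 c2 D12 by blast
  have n1: "cen m j i \<notin> Ng m j i" using cen_notin[of j m i] j i tm by simp
  have n2: "cen m j' i' \<notin> Ng m j' i'" using cen_notin[of j' m i'] j' i' tm by simp
  have PN: "{cen m j i, cen m j' i'} \<inter> (Ng m j i \<union> Ng m j' i') = {}"
    using n1 n2 D12 c1 c2 by blast
  have NN: "Ng m j i \<inter> Ng m j' i' = {}" using D12 by blast
  have fin: "finite ?F" using finite_Ng by simp
  have "measure_pmf.prob p {R. {cen m j i, cen m j' i'} \<subseteq> R \<and> (Ng m j i \<union> Ng m j' i') \<inter> R = {}} =
      q ^ card {cen m j i, cen m j' i'} * (1-q) ^ card (Ng m j i \<union> Ng m j' i')"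
    by (rule prob_pattern[OF ind[OF r fo] pe'[OF r] fin]) (use PN in auto)
  also have "card {cen m j i, cen m j' i'} = 2" using ne by simp
  also have "card (Ng m j i \<union> Ng m j' i') = 2 * i + 2 * i'"
    using card_Un_disjoint[OF finite_Ng finite_Ng NN] card_Ng[of j m i] card_Ng[of j' m i'] j j' i i' tm
    by simp
  also have "{R. {cen m j i, cen m j' i'} \<subseteq> R \<and> (Ng m j i \<union> Ng m j' i') \<inter> R = {}} = evt m j i \<inter> evt m j' i'"
    unfolding evt_def by auto
  finally show ?thesis by (simp add: power_add algebra_simps power2_eq_square)
qed

lemma prob_Ys2: assumes j: "j < m" and j': "j' < m" and far: "Idx m t j \<inter> Idx m t j' = {}"
  shows "measure_pmf.prob p (Ys m t j \<inter> Ys m t j') = pp * pp"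
proof -
  have eq: "Ys m t j \<inter> Ys m t j' = (\<Union>ii\<in>{..<t} \<times> {..<t}. evt m j (fst ii) \<inter> evt m j' (snd ii))"
    unfolding Ys_def by auto
  have "measure_pmf.prob p (Ys m t j \<inter> Ys m t j') =
      (\<Sum>ii\<in>{..<t} \<times> {..<t}. measure_pmf.prob p (evt m j (fst ii) \<inter> evt m j' (snd ii)))"
    unfolding eq
  proof (rule measure_pmf.finite_measure_finite_Union)
    show "disjoint_family_on (\<lambda>ii. evt m j (fst ii) \<inter> evt m j' (snd ii)) ({..<t} \<times> {..<t})"
      unfolding disjoint_family_on_def
    proof (intro ballI impI)
      fix a b :: "nat \<times> nat" assume "a \<noteq> b"
      then have "fst a \<noteq> fst b \<or> snd a \<noteq> snd b" by (cases a, cases b) auto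
      then show "(evt m j (fst a) \<inter> evt m j' (snd a)) \<inter> (evt m j (fst b) \<inter> evt m j' (snd b)) = {}"
      proof
        assume "fst a \<noteq> fst b"
        then have "evt m j (fst a) \<inter> evt m j (fst b) = {}"
          by (metis Int_commute evt_disj linorder_neqE_nat)
        then show ?thesis by blast
      next
        assume "snd a \<noteq> snd b"
        then have "evt m j' (snd a) \<inter> evt m j' (snd b) = {}"
          by (metis Int_commute evt_disj linorder_neqE_nat)
        then show ?thesis by blast
      qed
    qed
  qed auto
  also have "\<dots> = (\<Sum>ii\<in>{..<t} \<times> {..<t}. q * (1-q)^(2 * fst ii) * (q * (1-q)^(2 * snd ii)))"
    by (rule sum.cong) (auto simp: prob_ev2 j j' far)
  also have "\<dots> = (\<Sum>i<t. q * (1-q)^(2*i)) * (\<Sum>i'<t. q * (1-q)^(2*i'))"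
    by (simp add: sum_product sum.cartesian_product split_def)
  finally show ?thesis unfolding pp_def .
qed


lemma close_sub: assumes j: "j < m"
  shows "{j'\<in>{..<m}. Idx m t j \<inter> Idx m t j' \<noteq> {}} \<subseteq> (\<lambda>(s, s'). (j + s + (m - s')) mod m) ` ({..<t} \<times> {..<t})"
proof
  fix j' assume "j' \<in> {j'\<in>{..<m}. Idx m t j \<inter> Idx m t j' \<noteq> {}}"
  then have j': "j' < m" and "Idx m t j \<inter> Idx m t j' \<noteq> {}" by auto
  then obtain s s' where s: "s < t" and s': "s' < t" and eq: "(j + s) mod m = (j' + s') mod m"
    unfolding Idx_def by auto
  have s'm: "s' \<le> m" using s' tm by simp
  have "j' = (j' + s' + (m - s')) mod m" using j' s'm by simp
  also have "\<dots> = ((j' + s') mod m + (m - s')) mod m" by (simp add: mod_add_left_eq)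
  also have "\<dots> = ((j + s) mod m + (m - s')) mod m" using eq by simp
  also have "\<dots> = (j + s + (m - s')) mod m" by (simp add: mod_add_left_eq)
  finally show "j' \<in> (\<lambda>(s, s'). (j + s + (m - s')) mod m) ` ({..<t} \<times> {..<t})"
    using s s' by force
qed

lemma close_card: assumes j: "j < m"
  shows "card {j'\<in>{..<m}. Idx m t j \<inter> Idx m t j' \<noteq> {}} \<le> t * t"
proof -
  have "card {j'\<in>{..<m}. Idx m t j \<inter> Idx m t j' \<noteq> {}} \<le> card ((\<lambda>(s, s'). (j + s + (m - s')) mod m) ` ({..<t} \<times> {..<t}))"
    by (rule card_mono[OF _ close_sub[OF j]]) simp
  also have "\<dots> \<le> card ({..<t} \<times> {..<t})" by (rule card_image_le) simp
  also have "\<dots> = t * t" by (simp add: card_cartesian_product)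
  finally show ?thesis .
qed

definition Xc :: "(nat \<times> nat) set \<Rightarrow> real" where "Xc R = (\<Sum>j<m. indicator (Ys m t j) R)"

lemma pp_nonneg: "0 \<le> pp"
proof -
  have "q = measure_pmf.prob p {R. (0, 0) \<in> R}" using pe m0 by simp
  then have "0 \<le> q" "q \<le> 1" by auto
  then show ?thesis unfolding pp_def by (intro sum_nonneg) simp
qed

lemma term_int: assumes j: "j < m" and j': "j' < m"
  shows "measure_pmf.expectation p (\<lambda>R. (indicator (Ys m t j) R - pp) * (indicator (Ys m t j') R - pp))
     \<le> (if Idx m t j \<inter> Idx m t j' \<noteq> {} then 1 else 0)"
proof -
  have pw: "(indicator (Ys m t j) R - pp) * (indicator (Ys m t j') R - pp) =
      indicator (Ys m t j \<inter> Ys m t j') R - pp * indicator (Ys m t j) R - pp * indicator (Ys m t j') R + pp * pp" for R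
    by (simp add: indicator_def algebra_simps)
  have "measure_pmf.expectation p (\<lambda>R. (indicator (Ys m t j) R - pp) * (indicator (Ys m t j') R - pp))
     = measure_pmf.prob p (Ys m t j \<inter> Ys m t j') - pp * measure_pmf.prob p (Ys m t j)
        - pp * measure_pmf.prob p (Ys m t j') + pp * pp"
    unfolding pw by (rule pmf_int_ind)
  also have "\<dots> = measure_pmf.prob p (Ys m t j \<inter> Ys m t j') - pp * pp"
    using prob_Ys j j' by simp
  finally have e: "measure_pmf.expectation p (\<lambda>R. (indicator (Ys m t j) R - pp) * (indicator (Ys m t j') R - pp))
      = measure_pmf.prob p (Ys m t j \<inter> Ys m t j') - pp * pp" .
  show ?thesis
  proof (cases "Idx m t j \<inter> Idx m t j' \<noteq> {}")
    case True
    have "measure_pmf.prob p (Ys m t j \<inter> Ys m t j') \<le> 1" by simp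
    moreover have "0 \<le> pp * pp" using pp_nonneg by simp
    ultimately have "measure_pmf.prob p (Ys m t j \<inter> Ys m t j') - pp * pp \<le> 1" by linarith
    then show ?thesis using e True by simp
  next
    case False
    then show ?thesis using e prob_Ys2 j j' by simp
  qed
qed

lemma second_moment:
  "measure_pmf.expectation p (\<lambda>R. (Xc R - pp * m)\<^sup>2) \<le> real m * (real t * real t)"
proof -
  have pw: "(Xc R - pp * m)\<^sup>2 = (\<Sum>j<m. \<Sum>j'<m. (indicator (Ys m t j) R - pp) * (indicator (Ys m t j') R - pp))" for R
  proof -
    have "Xc R - pp * m = (\<Sum>j<m. (indicator (Ys m t j) R - pp))"
      unfolding Xc_def by (simp add: sum_subtractf)
    then show ?thesis by (simp add: power2_eq_square sum_product)
  qed
  have int: "integrable (measure_pmf p) (\<lambda>R. (indicator (Ys m t j) R - pp) * (indicator (Ys m t j') R - pp))" for j j'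
  proof (rule pmf_integrable_bounded[where B = "(1 + pp) * (1 + pp)"])
    fix R
    have a: "\<bar>indicator (Ys m t j) R - pp\<bar> \<le> 1 + pp" for j
      using pp_nonneg by (auto simp: indicator_def)
    show "\<bar>(indicator (Ys m t j) R - pp) * (indicator (Ys m t j') R - pp)\<bar> \<le> (1 + pp) * (1 + pp)"
      unfolding abs_mult by (rule mult_mono[OF a a]) (use pp_nonneg in auto)
  qed
  have "measure_pmf.expectation p (\<lambda>R. (Xc R - pp * m)\<^sup>2) =
      (\<Sum>j<m. \<Sum>j'<m. measure_pmf.expectation p (\<lambda>R. (indicator (Ys m t j) R - pp) * (indicator (Ys m t j') R - pp)))"
    unfolding pw
    by (subst Bochner_Integration.integral_sum, rule Bochner_Integration.integrable_sum, rule int)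
       (subst Bochner_Integration.integral_sum, rule int, rule refl)
  also have "\<dots> \<le> (\<Sum>j<m. \<Sum>j'<m. (if Idx m t j \<inter> Idx m t j' \<noteq> {} then 1 else 0))"
    by (intro sum_mono term_int) auto
  also have "\<dots> = (\<Sum>j<m. real (card {j'\<in>{..<m}. Idx m t j \<inter> Idx m t j' \<noteq> {}}))"
    by (intro sum.cong refl) (simp add: sum.inter_filter[symmetric])
  also have "\<dots> \<le> (\<Sum>j<m. real t * real t)"
    by (intro sum_mono) (use close_card in \<open>auto simp del: of_nat_mult simp: of_nat_mult[symmetric]\<close>)
  also have "\<dots> = real m * (real t * real t)" by simp
  finally show ?thesis .
qed

end


context sm_setup begin

lemma pp_eq: "pp = (\<Sum>i<t. q * (1-q)^(2*i))" by (simp add: pp_def)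

lemma Xc_nonneg: "0 \<le> Xc R" unfolding Xc_def by (intro sum_nonneg) auto
lemma Xc_le: "Xc R \<le> real m"
proof -
  have "Xc R \<le> (\<Sum>j<m. 1)" unfolding Xc_def by (intro sum_mono) (auto simp: indicator_def)
  then show ?thesis by simp
qed

lemma bad_bound: assumes b: "\<beta> < pp"
  shows "measure_pmf.prob p {R. Xc R < \<beta> * m} \<le> real t * real t / ((pp - \<beta>)\<^sup>2 * real m)"
proof -
  define c where "c = ((pp - \<beta>) * real m)\<^sup>2"
  have mpos: "0 < real m" using m0 by simp
  have cpos: "0 < c" unfolding c_def using b mpos by simp
  have sub: "{R. Xc R < \<beta> * m} \<subseteq> {R. (Xc R - pp * m)\<^sup>2 \<ge> c}"
  proof
    fix R assume "R \<in> {R. Xc R < \<beta> * m}"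
    then have "Xc R < \<beta> * m" by simp
    then have h: "(pp - \<beta>) * real m \<le> pp * m - Xc R" by (simp add: algebra_simps)
    have "0 \<le> (pp - \<beta>) * real m" using b mpos by simp
    then have "((pp - \<beta>) * real m)\<^sup>2 \<le> (pp * m - Xc R)\<^sup>2" by (rule power_mono[OF h])
    then show "R \<in> {R. (Xc R - pp * m)\<^sup>2 \<ge> c}" unfolding c_def by (simp add: power2_commute)
  qed
  have "measure_pmf.prob p {R. Xc R < \<beta> * m} \<le> measure_pmf.prob p {R. (Xc R - pp * m)\<^sup>2 \<ge> c}"
    by (rule measure_pmf.finite_measure_mono[OF sub]) simp
  also have "\<dots> \<le> measure_pmf.expectation p (\<lambda>R. (Xc R - pp * m)\<^sup>2) / c"
  proof (rule pmf_markov[where B = "(real m + pp * m)\<^sup>2"])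
    fix R
    show "0 \<le> (Xc R - pp * real m)\<^sup>2" by simp
    have "\<bar>Xc R - pp * real m\<bar> \<le> real m + pp * m"
      using Xc_nonneg[of R] Xc_le[of R] pp_nonneg mpos mult_nonneg_nonneg[OF pp_nonneg, of "real m"]
      unfolding abs_le_iff by linarith
    then show "(Xc R - pp * real m)\<^sup>2 \<le> (real m + pp * real m)\<^sup>2"
      by (metis abs_le_square_iff abs_of_nonneg add_nonneg_nonneg mult_nonneg_nonneg of_nat_0_le_iff pp_nonneg)
  qed (rule cpos)
  also have "\<dots> \<le> real m * (real t * real t) / c"
    by (rule divide_right_mono[OF second_moment]) (use cpos in simp)
  also have "\<dots> = real t * real t / ((pp - \<beta>)\<^sup>2 * real m)"
  proof -
    have cm: "c = ((pp - \<beta>)\<^sup>2 * real m) * real m" unfolding c_def by (simp add: power2_eq_square)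
    have "real m * T / (Y * real m) = T / Y" for T Y using mpos by simp
    then show ?thesis unfolding cm .
  qed
  finally show ?thesis .
qed

lemma Xc_le_card: "Xc R \<le> real (card (set (split_mesher R m t)))"
proof -
  have "Xc R = (\<Sum>j<m. if R \<in> Ys m t j then 1 else 0)" unfolding Xc_def
    by (intro sum.cong refl) (simp split: split_indicator)
  also have "\<dots> = real (card {j\<in>{..<m}. R \<in> Ys m t j})"
    by (simp add: sum.inter_filter[symmetric])
  also have "card {j\<in>{..<m}. R \<in> Ys m t j} \<le> card (fst ` set (split_mesher R m t))"
  proof (rule card_mono)
    show "{j\<in>{..<m}. R \<in> Ys m t j} \<subseteq> fst ` set (split_mesher R m t)"
    proof
      fix j assume "j \<in> {j\<in>{..<m}. R \<in> Ys m t j}"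
      then have j: "j < m" and "R \<in> Ys m t j" by auto
      then obtain i where i: "i < t" and evt: "R \<in> evt m j i" unfolding Ys_def by auto
      have c: "(j, (j+i) mod m) \<in> R" using evt unfolding evt_def cen_def by auto
      have n: "((j+s) mod m, (j+i) mod m) \<notin> R" if "1 \<le> s" "s \<le> i" for s
      proof -
        have "((j+s) mod m, (j+i) mod m) \<in> Ng m j i" unfolding Ng_def Rp_def using that by auto
        then show ?thesis using evt unfolding evt_def by auto
      qed
      show "j \<in> fst ` set (split_mesher R m t)" by (rule key[OF j i tm c n])
    qed
  qed simp
  then have "real (card {j\<in>{..<m}. R \<in> Ys m t j}) \<le> real (card (fst ` set (split_mesher R m t)))" by simp
  also have "card (fst ` set (split_mesher R m t)) \<le> card (set (split_mesher R m t))" by (rule card_image_le) simp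
  finally show ?thesis by simp
qed

end

lemma pp_gt:
  fixes q k :: real and t :: nat
  assumes q: "0 < q" "q < 1" and k: "k > 1" and qt: "q * real t = k"
  shows "(1 - exp (- 2 * k)) / 2 < (\<Sum>i<t. q * (1-q)^(2*i))"
proof -
  define x where "x = (1 - q)^2"
  have x1: "x \<noteq> 1" "1 - x = q * (2 - q)" unfolding x_def using q by (auto simp: power2_eq_square algebra_simps)
  have "(\<Sum>i<t. q * (1-q)^(2*i)) = q * (\<Sum>i<t. x ^ i)"
    unfolding x_def by (simp add: sum_distrib_left power_mult)
  also have "\<dots> = q * ((1 - x ^ t) / (1 - x))" using x1 by (simp add: sum_gp_strict)
  also have "\<dots> = (1 - x ^ t) / (2 - q)" by (subst x1(2)) (use q in auto)
  finally have eq: "(\<Sum>i<t. q * (1-q)^(2*i)) = (1 - x ^ t) / (2 - q)" .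
  have "1 - q \<le> exp (- q)" using exp_ge_add_one_self[of "-q"] by simp
  then have "(1 - q) ^ (2 * t) \<le> exp (- q) ^ (2 * t)" using q by (intro power_mono) auto
  also have "\<dots> = exp (real (2 * t) * (- q))" by (rule exp_of_nat_mult[symmetric])
  also have "real (2 * t) * (- q) = - 2 * k" using qt by (simp add: algebra_simps)
  finally have xt: "x ^ t \<le> exp (- 2 * k)" unfolding x_def by (simp add: power_mult)
  have e1: "exp (- 2 * k) < 1" using k by simp
  have "(1 - exp (- 2 * k)) / 2 < (1 - exp (- 2 * k)) / (2 - q)"
    using q e1 by (intro divide_strict_left_mono) auto
  also have "\<dots> \<le> (1 - x ^ t) / (2 - q)" using xt q by (intro divide_right_mono) auto
  finally show ?thesis using eq by simp
qed



theorem lemma5p1: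
  fixes q k :: real and t :: nat
    and P :: "nat \<Rightarrow> (nat \<times> nat) set pmf"
  assumes q: "0 < q" "q < 1"
    and k: "k > 1"
    and t: "real t = k / q" "t > 0"
    and prob_edge: "\<And>m i j. real (2 * m) \<ge> 2 * k / q \<Longrightarrow> i < m \<Longrightarrow> j < m \<Longrightarrow>
              measure_pmf.prob (P m) {R. (i, j) \<in> R} = q"
    and forest_indep: "\<And>m F. real (2 * m) \<ge> 2 * k / q \<Longrightarrow> F \<subseteq> {..<m} \<times> {..<m} \<Longrightarrow>
              bip_forest F \<Longrightarrow> prob_space.indep_events (measure_pmf (P m)) (\<lambda>e. {R. e \<in> R}) F"
  shows "(\<lambda>m. measure_pmf.prob (P m)
            {R. is_matching R m (set (split_mesher R m t)) \<and>
                real (card (set (split_mesher R m t))) \<ge> real (2 * m) * (1 - exp (- 2 * k)) / 4})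
         \<longlonglongrightarrow> 1"
proof -
  define \<beta> where "\<beta> = (1 - exp (- 2 * k)) / 2"
  define pp0 where "pp0 = (\<Sum>i<t. q * (1-q)^(2*i))"
  have qt: "q * real t = k" using t(1) q by (simp add: field_simps)
  have gt: "\<beta> < pp0" unfolding \<beta>_def pp0_def by (rule pp_gt[OF q k qt])
  define C where "C = real t * real t / (pp0 - \<beta>)\<^sup>2"
  define G where "G = (\<lambda>m. {R. is_matching R m (set (split_mesher R m t)) \<and>
                real (card (set (split_mesher R m t))) \<ge> real (2 * m) * (1 - exp (- 2 * k)) / 4})"
  have lower: "1 - C / real m \<le> measure_pmf.prob (P m) (G m)" if m: "t \<le> m" for m
  proof -
    have valid: "real (2 * m) \<ge> 2 * k / q"
    proof -
      have "2 * k / q = 2 * real t" using t(1) by simp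
      also have "\<dots> \<le> real (2 * m)" using m by simp
      finally show ?thesis .
    qed
    interpret S: sm_setup "P m" q m t
    proof
      show "\<And>F. F \<subseteq> {..<m} \<times> {..<m} \<Longrightarrow> bip_forest F \<Longrightarrow>
          prob_space.indep_events (measure_pmf (P m)) (\<lambda>e. {R. e \<in> R}) F"
        using forest_indep[OF valid] by blast
      show "\<And>i j. i < m \<Longrightarrow> j < m \<Longrightarrow> measure_pmf.prob (P m) {R. (i, j) \<in> R} = q"
        using prob_edge[OF valid] by blast
    qed (use m t(2) in auto)
    have ppe: "S.pp = pp0" by (simp add: S.pp_eq pp0_def)
    have m0: "0 < m" using m t(2) by simp
    have sub: "UNIV - {R. S.Xc R < \<beta> * m} \<subseteq> G m"
    proof
      fix R assume "R \<in> UNIV - {R. S.Xc R < \<beta> * m}"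
      then have "\<beta> * m \<le> S.Xc R" by simp
      also have "\<dots> \<le> real (card (set (split_mesher R m t)))" by (rule S.Xc_le_card)
      finally have "real (2 * m) * (1 - exp (- 2 * k)) / 4 \<le> real (card (set (split_mesher R m t)))"
        unfolding \<beta>_def by (simp add: mult.commute)
      then show "R \<in> G m" unfolding G_def using sm_matching[OF m0] by simp
    qed
    have "1 - C / real m \<le> 1 - measure_pmf.prob (P m) {R. S.Xc R < \<beta> * m}"
      using S.bad_bound[of \<beta>] gt unfolding ppe C_def by simp
    also have "1 - measure_pmf.prob (P m) {R. S.Xc R < \<beta> * m} =
        measure_pmf.prob (P m) (space (measure_pmf (P m)) - {R. S.Xc R < \<beta> * m})"
      by (rule measure_pmf.prob_compl[symmetric]) simp
    also have "\<dots> \<le> measure_pmf.prob (P m) (G m)"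
      by (rule measure_pmf.finite_measure_mono) (use sub in auto)
    finally show ?thesis .
  qed
  have lim: "(\<lambda>m. 1 - C / real m) \<longlonglongrightarrow> 1"
    using tendsto_diff[OF tendsto_const lim_const_over_n[of C]] by simp
  have "(\<lambda>m. measure_pmf.prob (P m) (G m)) \<longlonglongrightarrow> 1"
  proof (rule tendsto_sandwich[OF _ _ lim tendsto_const])
    show "\<forall>\<^sub>F m in sequentially. 1 - C / real m \<le> measure_pmf.prob (P m) (G m)"
      using lower by (intro eventually_sequentiallyI[of t]) auto
    show "\<forall>\<^sub>F m in sequentially. measure_pmf.prob (P m) (G m) \<le> 1"
      by simp
  qed
  then show ?thesis unfolding G_def .
qed


end
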